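(* Let $k=\mathbb{F}_3$, let $O_7(k)$ be the group of $7\times7$ matrices over $k$ orthogonal for the bilinear form $\langle x,y\rangle=x_1y_7+x_2y_6+\dots+x_7y_1$ on $k^7$, and let \[ A=\begin{pmatrix} 0&0&1&0&0&1&0\\ 1&0&0&0&0&0&1\\ 0&1&0&0&0&0&0\\ 0&0&0&0&0&0&0\\ 0&1&0&0&0&0&1\\ 0&0&1&0&1&0&0\\ 0&0&0&0&0&1&0 \end{pmatrix}. \] Then there is no $g\in O_7(k)$ such that the matrix $M=g^{-1}Ag$ satisfies $M_{ij}=0$ for all $(i,j)$ in \[ \{(3,1),(4,1),(5,1),(5,2),(6,1),(6,2),(6,3),(7,1),(7,2),(7,3),(7,4),(7,5)\} \] (with the remaining entries arbitrary).
   Context: $M_{ij}$ denotes the entry in row $i$ and column $j$. *)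

theory Defs
  imports "HOL-Analysis.Analysis" "HOL-Library.Numeral_Type"
begin

text \<open>The field F_3 is the type 3 (integers mod 3); k^7 is 3^7, indexed by the type 7.
 Paper index a in {1..7} corresponds to the element ix a = of_nat (a - 1) of type 7.\<close>

definition ix :: "nat \<Rightarrow> 7" where
  "ix a = of_nat (a - 1)"

definition bform :: "3^7 \<Rightarrow> 3^7 \<Rightarrow> 3" where
  "bform x y = (\<Sum>a = 1..7. x $ ix a * y $ ix (8 - a))"

definition O7 :: "(3^7^7) set" where
  "O7 = {g. \<forall>x y. bform (g *v x) (g *v y) = bform x y}"

definition A_nonzero :: "(nat \<times> nat) set" where
  "A_nonzero = {(1,3),(1,6),(2,1),(2,7),(3,2),(5,2),(5,7),(6,3),(6,5),(7,6)}"

definition matA :: "3^7^7" where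
  "matA = (\<chi> i j. if (\<exists>a b. (a, b) \<in> A_nonzero \<and> i = ix a \<and> j = ix b) then 1 else 0)"

definition zero_pos :: "(nat \<times> nat) set" where
  "zero_pos = {(3,1),(4,1),(5,1),(5,2),(6,1),(6,2),(6,3),(7,1),(7,2),(7,3),(7,4),(7,5)}"

end

theory Submission
  imports Defs
begin

lemma three_cases: "(x::3) = 0 \<or> x = 1 \<or> x = 2"
proof (cases x)
  case (of_int z)
  then have "z = 0 \<or> z = 1 \<or> z = 2" by auto
  then show ?thesis using of_int by auto
qed

lemma ex3: "(\<exists>x::3. P x) \<longleftrightarrow> P 0 \<or> P 1 \<or> P 2"
  using three_cases by metis

lemma UNIV7: "(UNIV::7 set) = {0,1,2,3,4,5,6}"
proof -
  have "x \<in> {0,1,2,3,4,5,6}" for x :: 7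
  proof (cases x)
    case (of_int z)
    then have "z = 0 \<or> z = 1 \<or> z = 2 \<or> z = 3 \<or> z = 4 \<or> z = 5 \<or> z = 6" by auto
    then show ?thesis using of_int by auto
  qed
  then show ?thesis by auto
qed

lemma sum7: "sum f (UNIV::7 set) = f 0 + f 1 + f 2 + f 3 + f 4 + f 5 + f 6"
  unfolding UNIV7 by (simp add: add.assoc)

lemma ix_simps: "ix (Suc 0) = 0" "ix 1 = 0" "ix 2 = 1" "ix 3 = 2" "ix 4 = 3" "ix 5 = 4" "ix 6 = 5" "ix 7 = 6"
  by (simp_all add: ix_def)

lemma matA_cond: "(\<exists>a b. (a, b) \<in> A_nonzero \<and> i = ix a \<and> j = ix b) \<longleftrightarrow>
   (i,j) \<in> {(0,2),(0,5),(1,0),(1,6),(2,1),(4,1),(4,6),(5,2),(5,4),(6,5)}"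
proof -
  have "(\<exists>a b. (a, b) \<in> A_nonzero \<and> i = ix a \<and> j = ix b) \<longleftrightarrow> (\<exists>p\<in>A_nonzero. i = ix (fst p) \<and> j = ix (snd p))"
    by (simp add: Bex_def split_paired_Ex)
  also have "\<dots> \<longleftrightarrow> (i,j) \<in> {(0,2),(0,5),(1,0),(1,6),(2,1),(4,1),(4,6),(5,2),(5,4),(6,5)}"
    unfolding A_nonzero_def by (simp add: ix_simps)
  finally show ?thesis .
qed

lemma matA_expl: "matA $ i $ j = (if (i,j) \<in> {(0,2),(0,5),(1,0),(1,6),(2,1),(4,1),(4,6),(5,2),(5,4),(6,5)} then 1 else 0)"
  unfolding matA_def by (simp only: vec_lambda_beta matA_cond)

lemma all7: "(\<forall>i::7. P i) \<longleftrightarrow> P 0 \<and> P 1 \<and> P 2 \<and> P 3 \<and> P 4 \<and> P 5 \<and> P 6"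
  unfolding ball_UNIV[symmetric] UNIV7 by simp

lemma bform_expl: "bform x y = x$0*y$6 + x$1*y$5 + x$2*y$4 + x$3*y$3 + x$4*y$2 + x$5*y$1 + x$6*y$0"
proof -
  have "{1..7::nat} = {1,2,3,4,5,6,7}" by auto
  then show ?thesis by (simp add: bform_def ix_simps add.assoc)
qed

lemma bform_sum: "bform x y = (\<Sum>k\<in>UNIV. x$k * y$(6-k))"
  by (simp add: bform_expl sum7 add.assoc)

lemma Av:
  "(matA *v x)$0 = x$2 + x$5"
  "(matA *v x)$1 = x$0 + x$6"
  "(matA *v x)$2 = x$1"
  "(matA *v x)$3 = 0"
  "(matA *v x)$4 = x$1 + x$6"
  "(matA *v x)$5 = x$2 + x$4"
  "(matA *v x)$6 = x$5"
  by (simp_all add: matrix_vector_mult_def sum7 matA_expl)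

lemma bform_add_left: "bform (x + y) z = bform x z + bform y z"
  by (simp add: bform_expl algebra_simps)
lemma bform_add_right: "bform z (x + y) = bform z x + bform z y"
  by (simp add: bform_expl algebra_simps)
lemma bform_smult_left: "bform (c *s x) z = c * bform x z"
  by (simp add: bform_expl algebra_simps)
lemma bform_smult_right: "bform z (c *s x) = c * bform z x"
  by (simp add: bform_expl algebra_simps)
lemma bform_sym: "bform x y = bform y x"
  by (simp add: bform_expl algebra_simps)
lemma bform_zero_left: "bform 0 y = 0"
  by (simp add: bform_expl)
lemma bform_selfadj: "bform (matA *v x) y = bform x (matA *v y)"
  by (simp add: bform_expl Av algebra_simps)

lemma bform_axis: "bform (axis d 1) (axis c 1) = (if 6 - d = c then 1 else (0::3))"
proof -
  have "bform (axis d 1) (axis c 1) = (\<Sum>k\<in>UNIV. (if k = d then (axis c 1 $ (6-k) :: 3) else 0))"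
    unfolding bform_sum by (rule sum.cong) (auto simp: axis_def)
  also have "\<dots> = axis c 1 $ (6 - d)" by simp
  finally show ?thesis by (simp add: axis_def)
qed

lemma col_axis: "(g::3^7^7) *v axis c 1 = (\<chi> r. g$r$c)"
proof -
  have "(g *v axis c 1) $ r = g$r$c" for r
  proof -
    have "(g *v axis c 1) $ r = (\<Sum>k\<in>UNIV. if k = c then g$r$k else 0)"
      unfolding matrix_vector_mult_def vec_lambda_beta by (rule sum.cong) (auto simp: axis_def)
    also have "\<dots> = g$r$c" by simp
    finally show ?thesis .
  qed
  then show ?thesis by (simp add: vec_eq_iff)
qed

lemma mv_add: "(A::3^7^7) *v (x + y) = A *v x + A *v y"
  by (simp add: matrix_vector_right_distrib)
lemma mv_smult: "(A::3^7^7) *v (c *s x) = c *s (A *v x)"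
  by (simp add: vec_eq_iff matrix_vector_mult_def sum_distrib_left algebra_simps)


lemma t3:
  "(2::3)*2 = 1" "(1::3)+1 = 2" "(1::3)+2 = 0" "(2::3)+1 = 0" "(2::3)+2 = 1" "(4::3) = 1"
  "((1::3) = 0) = False" "((2::3) = 0) = False" "((0::3) = 1) = False" "((0::3) = 2) = False"
  "((1::3) = 2) = False" "((2::3) = 1) = False"
  by simp_all

lemmas ss = t3 mult_zero_left mult_zero_right mult_1_left mult_1_right add_0_left add_0_right
  power2_eq_square insert_iff empty_iff prod.inject simp_thms

lemma E1s:
  fixes x0 x1 x2 x3 x4 x5 x6 :: 3
  assumes "2*x0*x6 + 2*x1*x5 + 2*x2*x4 + x3^2 = 0" "2*x0*x5 + 2*x1*x2 + 2*x1*x4 + 2*x2*x6 + 2*x5*x6 = 0" "2*x0*x2 + 2*x0*x4 + 2*x1^2 + 2*x1*x6 + 2*x2*x5 + 2*x2*x6 + 2*x4*x6 + 2*x5^2 = 0" "4*x0*x1 + 2*x0*x6 + 2*x1*x5 + 4*x1*x6 + 2*x2^2 + 2*x2*x4 + 4*x2*x5 + 4*x4*x5 + 2*x6^2 = 0"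
  shows "(x0,x1,x2,x3,x4,x5,x6) \<in> {(0,0,0,0,0,0,0),(0,0,0,0,1,0,0),(0,0,0,0,2,0,0),(0,1,2,0,1,1,2),(0,2,1,0,2,2,1),(1,0,0,0,0,0,0),(1,1,2,0,0,1,2),(2,0,0,0,0,0,0),(2,2,1,0,0,2,1)}"
  using assms
  by (insert three_cases[of "x0"], elim disjE; (simp only: ss)?; (insert three_cases[of "x1"], elim disjE; (simp only: ss)?; (insert three_cases[of "x2"], elim disjE; (simp only: ss)?; (insert three_cases[of "x4"], elim disjE; (simp only: ss)?; (insert three_cases[of "x5"], elim disjE; (simp only: ss)?; (insert three_cases[of "x6"], elim disjE; (simp only: ss)?; (insert three_cases[of "x3"], elim disjE; simp only: ss)))))))

lemma E2s_0:
  fixes x0 x1 x2 x3 x4 x5 x6 y0 y1 y2 y3 y4 y5 y6 :: 3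
  assumes "x0 = 0" "x1 = 0" "x2 = 0" "x3 = 0" "x4 = 1" "x5 = 0" "x6 = 0"
  and "x0*y6 + x1*y5 + x2*y4 + x3*y3 + x4*y2 + x5*y1 + x6*y0 = 0" "x0*y5 + x1*y2 + x1*y4 + x2*y1 + x2*y6 + x4*y1 + x5*y0 + x5*y6 + x6*y2 + x6*y5 = 0" "x0*y2 + x0*y4 + 2*x1*y1 + x1*y6 + x2*y0 + x2*y5 + x2*y6 + x4*y0 + x4*y6 + x5*y2 + 2*x5*y5 + x6*y1 + x6*y2 + x6*y4 = 0" "2*y0*y6 + 2*y1*y5 + 2*y2*y4 + y3^2 = 0"
  shows "\<exists>c d. y0 = c*x0 + d*(x2 + x5) \<and> y1 = c*x1 + d*(x0 + x6) \<and> y2 = c*x2 + d*(x1) \<and> y3 = c*x3 + d*(0) \<and> y4 = c*x4 + d*(x1 + x6) \<and> y5 = c*x5 + d*(x2 + x4) \<and> y6 = c*x6 + d*(x5)"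
  using assms(8-11) unfolding assms(1-7)
  by (insert three_cases[of "y1"], elim disjE; (simp only: ss)?; (insert three_cases[of "y2"], elim disjE; (simp only: ss)?; (insert three_cases[of "y0"], elim disjE; (simp only: ss)?; (insert three_cases[of "y6"], elim disjE; (simp only: ss)?; (insert three_cases[of "y3"], elim disjE; (simp only: ss)?; (insert three_cases[of "y4"], elim disjE; (simp only: ss)?; (insert three_cases[of "y5"], elim disjE; simp only: ss ex3)))))))

lemma E2s_1:
  fixes x0 x1 x2 x3 x4 x5 x6 y0 y1 y2 y3 y4 y5 y6 :: 3
  assumes "x0 = 0" "x1 = 0" "x2 = 0" "x3 = 0" "x4 = 2" "x5 = 0" "x6 = 0"
  and "x0*y6 + x1*y5 + x2*y4 + x3*y3 + x4*y2 + x5*y1 + x6*y0 = 0" "x0*y5 + x1*y2 + x1*y4 + x2*y1 + x2*y6 + x4*y1 + x5*y0 + x5*y6 + x6*y2 + x6*y5 = 0" "x0*y2 + x0*y4 + 2*x1*y1 + x1*y6 + x2*y0 + x2*y5 + x2*y6 + x4*y0 + x4*y6 + x5*y2 + 2*x5*y5 + x6*y1 + x6*y2 + x6*y4 = 0" "2*y0*y6 + 2*y1*y5 + 2*y2*y4 + y3^2 = 0"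
  shows "\<exists>c d. y0 = c*x0 + d*(x2 + x5) \<and> y1 = c*x1 + d*(x0 + x6) \<and> y2 = c*x2 + d*(x1) \<and> y3 = c*x3 + d*(0) \<and> y4 = c*x4 + d*(x1 + x6) \<and> y5 = c*x5 + d*(x2 + x4) \<and> y6 = c*x6 + d*(x5)"
  using assms(8-11) unfolding assms(1-7)
  by (insert three_cases[of "y1"], elim disjE; (simp only: ss)?; (insert three_cases[of "y2"], elim disjE; (simp only: ss)?; (insert three_cases[of "y0"], elim disjE; (simp only: ss)?; (insert three_cases[of "y6"], elim disjE; (simp only: ss)?; (insert three_cases[of "y3"], elim disjE; (simp only: ss)?; (insert three_cases[of "y4"], elim disjE; (simp only: ss)?; (insert three_cases[of "y5"], elim disjE; simp only: ss ex3)))))))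

lemma E2s_2:
  fixes x0 x1 x2 x3 x4 x5 x6 y0 y1 y2 y3 y4 y5 y6 :: 3
  assumes "x0 = 0" "x1 = 1" "x2 = 2" "x3 = 0" "x4 = 1" "x5 = 1" "x6 = 2"
  and "x0*y6 + x1*y5 + x2*y4 + x3*y3 + x4*y2 + x5*y1 + x6*y0 = 0" "x0*y5 + x1*y2 + x1*y4 + x2*y1 + x2*y6 + x4*y1 + x5*y0 + x5*y6 + x6*y2 + x6*y5 = 0" "x0*y2 + x0*y4 + 2*x1*y1 + x1*y6 + x2*y0 + x2*y5 + x2*y6 + x4*y0 + x4*y6 + x5*y2 + 2*x5*y5 + x6*y1 + x6*y2 + x6*y4 = 0" "2*y0*y6 + 2*y1*y5 + 2*y2*y4 + y3^2 = 0"
  shows "\<exists>c d. y0 = c*x0 + d*(x2 + x5) \<and> y1 = c*x1 + d*(x0 + x6) \<and> y2 = c*x2 + d*(x1) \<and> y3 = c*x3 + d*(0) \<and> y4 = c*x4 + d*(x1 + x6) \<and> y5 = c*x5 + d*(x2 + x4) \<and> y6 = c*x6 + d*(x5)"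
  using assms(8-11) unfolding assms(1-7)
  by (insert three_cases[of "y0"], elim disjE; (simp only: ss)?; (insert three_cases[of "y4"], elim disjE; (simp only: ss)?; (insert three_cases[of "y5"], elim disjE; (simp only: ss)?; (insert three_cases[of "y1"], elim disjE; (simp only: ss)?; (insert three_cases[of "y2"], elim disjE; (simp only: ss)?; (insert three_cases[of "y6"], elim disjE; (simp only: ss)?; (insert three_cases[of "y3"], elim disjE; simp only: ss ex3)))))))

lemma E2s_3:
  fixes x0 x1 x2 x3 x4 x5 x6 y0 y1 y2 y3 y4 y5 y6 :: 3
  assumes "x0 = 0" "x1 = 2" "x2 = 1" "x3 = 0" "x4 = 2" "x5 = 2" "x6 = 1"
  and "x0*y6 + x1*y5 + x2*y4 + x3*y3 + x4*y2 + x5*y1 + x6*y0 = 0" "x0*y5 + x1*y2 + x1*y4 + x2*y1 + x2*y6 + x4*y1 + x5*y0 + x5*y6 + x6*y2 + x6*y5 = 0" "x0*y2 + x0*y4 + 2*x1*y1 + x1*y6 + x2*y0 + x2*y5 + x2*y6 + x4*y0 + x4*y6 + x5*y2 + 2*x5*y5 + x6*y1 + x6*y2 + x6*y4 = 0" "2*y0*y6 + 2*y1*y5 + 2*y2*y4 + y3^2 = 0"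
  shows "\<exists>c d. y0 = c*x0 + d*(x2 + x5) \<and> y1 = c*x1 + d*(x0 + x6) \<and> y2 = c*x2 + d*(x1) \<and> y3 = c*x3 + d*(0) \<and> y4 = c*x4 + d*(x1 + x6) \<and> y5 = c*x5 + d*(x2 + x4) \<and> y6 = c*x6 + d*(x5)"
  using assms(8-11) unfolding assms(1-7)
  by (insert three_cases[of "y0"], elim disjE; (simp only: ss)?; (insert three_cases[of "y4"], elim disjE; (simp only: ss)?; (insert three_cases[of "y5"], elim disjE; (simp only: ss)?; (insert three_cases[of "y1"], elim disjE; (simp only: ss)?; (insert three_cases[of "y2"], elim disjE; (simp only: ss)?; (insert three_cases[of "y6"], elim disjE; (simp only: ss)?; (insert three_cases[of "y3"], elim disjE; simp only: ss ex3)))))))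

lemma E2s_4:
  fixes x0 x1 x2 x3 x4 x5 x6 y0 y1 y2 y3 y4 y5 y6 :: 3
  assumes "x0 = 1" "x1 = 0" "x2 = 0" "x3 = 0" "x4 = 0" "x5 = 0" "x6 = 0"
  and "x0*y6 + x1*y5 + x2*y4 + x3*y3 + x4*y2 + x5*y1 + x6*y0 = 0" "x0*y5 + x1*y2 + x1*y4 + x2*y1 + x2*y6 + x4*y1 + x5*y0 + x5*y6 + x6*y2 + x6*y5 = 0" "x0*y2 + x0*y4 + 2*x1*y1 + x1*y6 + x2*y0 + x2*y5 + x2*y6 + x4*y0 + x4*y6 + x5*y2 + 2*x5*y5 + x6*y1 + x6*y2 + x6*y4 = 0" "2*y0*y6 + 2*y1*y5 + 2*y2*y4 + y3^2 = 0"
  shows "\<exists>c d. y0 = c*x0 + d*(x2 + x5) \<and> y1 = c*x1 + d*(x0 + x6) \<and> y2 = c*x2 + d*(x1) \<and> y3 = c*x3 + d*(0) \<and> y4 = c*x4 + d*(x1 + x6) \<and> y5 = c*x5 + d*(x2 + x4) \<and> y6 = c*x6 + d*(x5)"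
  using assms(8-11) unfolding assms(1-7)
  by (insert three_cases[of "y5"], elim disjE; (simp only: ss)?; (insert three_cases[of "y6"], elim disjE; (simp only: ss)?; (insert three_cases[of "y2"], elim disjE; (simp only: ss)?; (insert three_cases[of "y4"], elim disjE; (simp only: ss)?; (insert three_cases[of "y0"], elim disjE; (simp only: ss)?; (insert three_cases[of "y1"], elim disjE; (simp only: ss)?; (insert three_cases[of "y3"], elim disjE; simp only: ss ex3)))))))

lemma E2s_5:
  fixes x0 x1 x2 x3 x4 x5 x6 y0 y1 y2 y3 y4 y5 y6 :: 3
  assumes "x0 = 1" "x1 = 1" "x2 = 2" "x3 = 0" "x4 = 0" "x5 = 1" "x6 = 2"
  and "x0*y6 + x1*y5 + x2*y4 + x3*y3 + x4*y2 + x5*y1 + x6*y0 = 0" "x0*y5 + x1*y2 + x1*y4 + x2*y1 + x2*y6 + x4*y1 + x5*y0 + x5*y6 + x6*y2 + x6*y5 = 0" "x0*y2 + x0*y4 + 2*x1*y1 + x1*y6 + x2*y0 + x2*y5 + x2*y6 + x4*y0 + x4*y6 + x5*y2 + 2*x5*y5 + x6*y1 + x6*y2 + x6*y4 = 0" "2*y0*y6 + 2*y1*y5 + 2*y2*y4 + y3^2 = 0"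
  shows "\<exists>c d. y0 = c*x0 + d*(x2 + x5) \<and> y1 = c*x1 + d*(x0 + x6) \<and> y2 = c*x2 + d*(x1) \<and> y3 = c*x3 + d*(0) \<and> y4 = c*x4 + d*(x1 + x6) \<and> y5 = c*x5 + d*(x2 + x4) \<and> y6 = c*x6 + d*(x5)"
  using assms(8-11) unfolding assms(1-7)
  by (insert three_cases[of "y0"], elim disjE; (simp only: ss)?; (insert three_cases[of "y1"], elim disjE; (simp only: ss)?; (insert three_cases[of "y4"], elim disjE; (simp only: ss)?; (insert three_cases[of "y2"], elim disjE; (simp only: ss)?; (insert three_cases[of "y5"], elim disjE; (simp only: ss)?; (insert three_cases[of "y6"], elim disjE; (simp only: ss)?; (insert three_cases[of "y3"], elim disjE; simp only: ss ex3)))))))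

lemma E2s_6:
  fixes x0 x1 x2 x3 x4 x5 x6 y0 y1 y2 y3 y4 y5 y6 :: 3
  assumes "x0 = 2" "x1 = 0" "x2 = 0" "x3 = 0" "x4 = 0" "x5 = 0" "x6 = 0"
  and "x0*y6 + x1*y5 + x2*y4 + x3*y3 + x4*y2 + x5*y1 + x6*y0 = 0" "x0*y5 + x1*y2 + x1*y4 + x2*y1 + x2*y6 + x4*y1 + x5*y0 + x5*y6 + x6*y2 + x6*y5 = 0" "x0*y2 + x0*y4 + 2*x1*y1 + x1*y6 + x2*y0 + x2*y5 + x2*y6 + x4*y0 + x4*y6 + x5*y2 + 2*x5*y5 + x6*y1 + x6*y2 + x6*y4 = 0" "2*y0*y6 + 2*y1*y5 + 2*y2*y4 + y3^2 = 0"
  shows "\<exists>c d. y0 = c*x0 + d*(x2 + x5) \<and> y1 = c*x1 + d*(x0 + x6) \<and> y2 = c*x2 + d*(x1) \<and> y3 = c*x3 + d*(0) \<and> y4 = c*x4 + d*(x1 + x6) \<and> y5 = c*x5 + d*(x2 + x4) \<and> y6 = c*x6 + d*(x5)"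
  using assms(8-11) unfolding assms(1-7)
  by (insert three_cases[of "y5"], elim disjE; (simp only: ss)?; (insert three_cases[of "y6"], elim disjE; (simp only: ss)?; (insert three_cases[of "y2"], elim disjE; (simp only: ss)?; (insert three_cases[of "y4"], elim disjE; (simp only: ss)?; (insert three_cases[of "y0"], elim disjE; (simp only: ss)?; (insert three_cases[of "y1"], elim disjE; (simp only: ss)?; (insert three_cases[of "y3"], elim disjE; simp only: ss ex3)))))))

lemma E2s_7:
  fixes x0 x1 x2 x3 x4 x5 x6 y0 y1 y2 y3 y4 y5 y6 :: 3
  assumes "x0 = 2" "x1 = 2" "x2 = 1" "x3 = 0" "x4 = 0" "x5 = 2" "x6 = 1"
  and "x0*y6 + x1*y5 + x2*y4 + x3*y3 + x4*y2 + x5*y1 + x6*y0 = 0" "x0*y5 + x1*y2 + x1*y4 + x2*y1 + x2*y6 + x4*y1 + x5*y0 + x5*y6 + x6*y2 + x6*y5 = 0" "x0*y2 + x0*y4 + 2*x1*y1 + x1*y6 + x2*y0 + x2*y5 + x2*y6 + x4*y0 + x4*y6 + x5*y2 + 2*x5*y5 + x6*y1 + x6*y2 + x6*y4 = 0" "2*y0*y6 + 2*y1*y5 + 2*y2*y4 + y3^2 = 0"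
  shows "\<exists>c d. y0 = c*x0 + d*(x2 + x5) \<and> y1 = c*x1 + d*(x0 + x6) \<and> y2 = c*x2 + d*(x1) \<and> y3 = c*x3 + d*(0) \<and> y4 = c*x4 + d*(x1 + x6) \<and> y5 = c*x5 + d*(x2 + x4) \<and> y6 = c*x6 + d*(x5)"
  using assms(8-11) unfolding assms(1-7)
  by (insert three_cases[of "y0"], elim disjE; (simp only: ss)?; (insert three_cases[of "y1"], elim disjE; (simp only: ss)?; (insert three_cases[of "y4"], elim disjE; (simp only: ss)?; (insert three_cases[of "y2"], elim disjE; (simp only: ss)?; (insert three_cases[of "y5"], elim disjE; (simp only: ss)?; (insert three_cases[of "y6"], elim disjE; (simp only: ss)?; (insert three_cases[of "y3"], elim disjE; simp only: ss ex3)))))))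

lemma SCs:
  fixes x0 x1 x2 x3 x4 x5 x6 y0 y1 y2 y3 y4 y5 y6 :: 3
  assumes nz: "\<not> (x0 = 0 \<and> x1 = 0 \<and> x2 = 0 \<and> x3 = 0 \<and> x4 = 0 \<and> x5 = 0 \<and> x6 = 0)"
  and hx: "2*x0*x6 + 2*x1*x5 + 2*x2*x4 + x3^2 = 0" "2*x0*x5 + 2*x1*x2 + 2*x1*x4 + 2*x2*x6 + 2*x5*x6 = 0" "2*x0*x2 + 2*x0*x4 + 2*x1^2 + 2*x1*x6 + 2*x2*x5 + 2*x2*x6 + 2*x4*x6 + 2*x5^2 = 0" "4*x0*x1 + 2*x0*x6 + 2*x1*x5 + 4*x1*x6 + 2*x2^2 + 2*x2*x4 + 4*x2*x5 + 4*x4*x5 + 2*x6^2 = 0"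
  and hy: "x0*y6 + x1*y5 + x2*y4 + x3*y3 + x4*y2 + x5*y1 + x6*y0 = 0" "x0*y5 + x1*y2 + x1*y4 + x2*y1 + x2*y6 + x4*y1 + x5*y0 + x5*y6 + x6*y2 + x6*y5 = 0" "x0*y2 + x0*y4 + 2*x1*y1 + x1*y6 + x2*y0 + x2*y5 + x2*y6 + x4*y0 + x4*y6 + x5*y2 + 2*x5*y5 + x6*y1 + x6*y2 + x6*y4 = 0" "2*y0*y6 + 2*y1*y5 + 2*y2*y4 + y3^2 = 0"
  shows "\<exists>c d. y0 = c*x0 + d*(x2 + x5) \<and> y1 = c*x1 + d*(x0 + x6) \<and> y2 = c*x2 + d*(x1) \<and> y3 = c*x3 + d*(0) \<and> y4 = c*x4 + d*(x1 + x6) \<and> y5 = c*x5 + d*(x2 + x4) \<and> y6 = c*x6 + d*(x5)"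
  using E1s[OF hx]
proof (elim insertE emptyE)
  assume "(x0,x1,x2,x3,x4,x5,x6) = (0,0,0,0,0,0,0)"
  then show ?thesis using nz by simp
next

  assume "(x0,x1,x2,x3,x4,x5,x6) = (0,0,0,0,1,0,0)"
  then have xe: "x0 = 0" "x1 = 0" "x2 = 0" "x3 = 0" "x4 = 1" "x5 = 0" "x6 = 0" by simp_all
  show ?thesis by (rule E2s_0[OF xe hy])
next

  assume "(x0,x1,x2,x3,x4,x5,x6) = (0,0,0,0,2,0,0)"
  then have xe: "x0 = 0" "x1 = 0" "x2 = 0" "x3 = 0" "x4 = 2" "x5 = 0" "x6 = 0" by simp_all
  show ?thesis by (rule E2s_1[OF xe hy])
next

  assume "(x0,x1,x2,x3,x4,x5,x6) = (0,1,2,0,1,1,2)"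
  then have xe: "x0 = 0" "x1 = 1" "x2 = 2" "x3 = 0" "x4 = 1" "x5 = 1" "x6 = 2" by simp_all
  show ?thesis by (rule E2s_2[OF xe hy])
next

  assume "(x0,x1,x2,x3,x4,x5,x6) = (0,2,1,0,2,2,1)"
  then have xe: "x0 = 0" "x1 = 2" "x2 = 1" "x3 = 0" "x4 = 2" "x5 = 2" "x6 = 1" by simp_all
  show ?thesis by (rule E2s_3[OF xe hy])
next

  assume "(x0,x1,x2,x3,x4,x5,x6) = (1,0,0,0,0,0,0)"
  then have xe: "x0 = 1" "x1 = 0" "x2 = 0" "x3 = 0" "x4 = 0" "x5 = 0" "x6 = 0" by simp_all
  show ?thesis by (rule E2s_4[OF xe hy])
next

  assume "(x0,x1,x2,x3,x4,x5,x6) = (1,1,2,0,0,1,2)"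
  then have xe: "x0 = 1" "x1 = 1" "x2 = 2" "x3 = 0" "x4 = 0" "x5 = 1" "x6 = 2" by simp_all
  show ?thesis by (rule E2s_5[OF xe hy])
next

  assume "(x0,x1,x2,x3,x4,x5,x6) = (2,0,0,0,0,0,0)"
  then have xe: "x0 = 2" "x1 = 0" "x2 = 0" "x3 = 0" "x4 = 0" "x5 = 0" "x6 = 0" by simp_all
  show ?thesis by (rule E2s_6[OF xe hy])
next

  assume "(x0,x1,x2,x3,x4,x5,x6) = (2,2,1,0,0,2,1)"
  then have xe: "x0 = 2" "x1 = 2" "x2 = 1" "x3 = 0" "x4 = 0" "x5 = 2" "x6 = 1" by simp_all
  show ?thesis by (rule E2s_7[OF xe hy])
qed

lemma SCv:
  fixes x y :: "3^7"
  assumes nz: "x \<noteq> 0" and h: "bform x x = 0" "bform x (matA *v x) = 0" "bform (matA *v x) (matA *v x) = 0"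
    "bform (matA *v x) (matA *v (matA *v x)) = 0" "bform x y = 0" "bform (matA *v x) y = 0"
    "bform (matA *v (matA *v x)) y = 0" "bform y y = 0"
  shows "\<exists>c d. y = c *s x + d *s (matA *v x)"
proof -
  have c0: "bform x x = 2*x$0*x$6 + 2*x$1*x$5 + 2*x$2*x$4 + x$3^2"
    unfolding bform_expl Av by (simp add: algebra_simps power2_eq_square)
  have c1: "bform x (matA *v x) = 2*x$0*x$5 + 2*x$1*x$2 + 2*x$1*x$4 + 2*x$2*x$6 + 2*x$5*x$6"
    unfolding bform_expl Av by (simp add: algebra_simps power2_eq_square)
  have c2: "bform (matA *v x) (matA *v x) = 2*x$0*x$2 + 2*x$0*x$4 + 2*x$1^2 + 2*x$1*x$6 + 2*x$2*x$5 + 2*x$2*x$6 + 2*x$4*x$6 + 2*x$5^2"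
    unfolding bform_expl Av by (simp add: algebra_simps power2_eq_square)
  have c3: "bform (matA *v x) (matA *v (matA *v x)) = 4*x$0*x$1 + 2*x$0*x$6 + 2*x$1*x$5 + 4*x$1*x$6 + 2*x$2^2 + 2*x$2*x$4 + 4*x$2*x$5 + 4*x$4*x$5 + 2*x$6^2"
    unfolding bform_expl Av by (simp add: algebra_simps power2_eq_square)
  have c4: "bform x y = x$0*y$6 + x$1*y$5 + x$2*y$4 + x$3*y$3 + x$4*y$2 + x$5*y$1 + x$6*y$0"
    unfolding bform_expl Av by (simp add: algebra_simps power2_eq_square)
  have c5: "bform (matA *v x) y = x$0*y$5 + x$1*y$2 + x$1*y$4 + x$2*y$1 + x$2*y$6 + x$4*y$1 + x$5*y$0 + x$5*y$6 + x$6*y$2 + x$6*y$5"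
    unfolding bform_expl Av by (simp add: algebra_simps power2_eq_square)
  have c6: "bform (matA *v (matA *v x)) y = x$0*y$2 + x$0*y$4 + 2*x$1*y$1 + x$1*y$6 + x$2*y$0 + x$2*y$5 + x$2*y$6 + x$4*y$0 + x$4*y$6 + x$5*y$2 + 2*x$5*y$5 + x$6*y$1 + x$6*y$2 + x$6*y$4"
    unfolding bform_expl Av by (simp add: algebra_simps power2_eq_square)
  have c7: "bform y y = 2*y$0*y$6 + 2*y$1*y$5 + 2*y$2*y$4 + y$3^2"
    unfolding bform_expl Av by (simp add: algebra_simps power2_eq_square)
  have nz': "\<not> (x$0 = 0 \<and> x$1 = 0 \<and> x$2 = 0 \<and> x$3 = 0 \<and> x$4 = 0 \<and> x$5 = 0 \<and> x$6 = 0)"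
    using nz by (simp add: vec_eq_iff all7)
  obtain c d where cd: "y$0 = c*x$0 + d*(x$2 + x$5) \<and> y$1 = c*x$1 + d*(x$0 + x$6) \<and> y$2 = c*x$2 + d*(x$1) \<and> y$3 = c*x$3 + d*(0) \<and> y$4 = c*x$4 + d*(x$1 + x$6) \<and> y$5 = c*x$5 + d*(x$2 + x$4) \<and> y$6 = c*x$6 + d*(x$5)"
    using SCs[OF nz' h(1)[unfolded c0] h(2)[unfolded c1] h(3)[unfolded c2] h(4)[unfolded c3]
      h(5)[unfolded c4] h(6)[unfolded c5] h(7)[unfolded c6] h(8)[unfolded c7]] by blast
  show ?thesis
    by (rule exI[of _ c], rule exI[of _ d]) (simp add: vec_eq_iff all7 Av cd)
qed

theorem lemma2p2:
  shows "\<not> (\<exists>g \<in> O7. \<forall>(i, j) \<in> zero_pos. (matrix_inv g ** matA ** g) $ ix i $ ix j = 0)"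
proof
  assume "\<exists>g \<in> O7. \<forall>(i, j) \<in> zero_pos. (matrix_inv g ** matA ** g) $ ix i $ ix j = 0"
  then obtain g where gO: "g \<in> O7"
    and hz: "\<forall>(i, j) \<in> zero_pos. (matrix_inv g ** matA ** g) $ ix i $ ix j = 0" by blast
  define M where "M = matrix_inv g ** matA ** g"
  define col where "col = (\<lambda>c. \<chi> r. g$r$c)"
  have pres: "bform (g *v x) (g *v y) = bform x y" for x y
    using gO by (simp add: O7_def)
  have Bcol: "bform (col c) (col d) = (if 6 - c = d then 1 else 0)" for c d
    using pres[of "axis c 1" "axis d 1"] by (simp add: col_axis col_def bform_axis)
  define L where "L = (\<chi> i k. g$(6-k)$(6-i))"
  have Lg: "L ** g = mat 1"
  proof -
    have "(L ** g)$i$j = mat 1 $ i $ j" for i j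
    proof -
      have "(L ** g)$i$j = (\<Sum>k\<in>UNIV. g$(6-k)$(6-i) * g$k$j)"
        by (simp add: L_def matrix_matrix_mult_def)
      also have "\<dots> = bform (col j) (col (6-i))"
        unfolding bform_sum col_def by (simp add: mult.commute)
      also have "\<dots> = (if 6 - j = 6 - i then 1 else 0)" by (rule Bcol)
      also have "\<dots> = mat 1 $ i $ j" by (auto simp: mat_def)
      finally show ?thesis .
    qed
    then show ?thesis by (simp add: vec_eq_iff)
  qed
  have inj: "inj ((*v) g)"
    by (rule inj_on_inverseI[where g="(*v) L"]) (simp add: matrix_vector_mul_assoc Lg)
  have surj: "surj ((*v) g)"
    using finite_UNIV_inj_surj[OF _ inj] by simp
  have gL: "g ** L = mat 1"
  proof -
    have "(g ** L) *v y = mat 1 *v y" for y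
    proof -
      obtain x where xy: "y = g *v x" using surj by (metis surjD)
      have "(g ** L) *v y = g *v ((L ** g) *v x)"
        by (simp add: matrix_vector_mul_assoc matrix_mul_assoc xy)
      also have "\<dots> = y" by (simp add: Lg xy)
      finally show ?thesis by simp
    qed
    then show ?thesis by (simp add: matrix_eq)
  qed
  have ginv: "g ** matrix_inv g = mat 1"
  proof -
    have "\<exists>A'. g ** A' = mat 1 \<and> A' ** g = mat 1" using gL Lg by blast
    then show ?thesis unfolding matrix_inv_def by (rule someI_ex[THEN conjunct1])
  qed
  have gM: "g ** M = matA ** g"
    by (simp add: M_def matrix_mul_assoc ginv)
  have colA: "matA *v col c = (\<chi> r. \<Sum>i\<in>UNIV. M$i$c * col i $ r)" for c
  proof -
    have "(matA *v col c) $ r = (\<Sum>i\<in>UNIV. M$i$c * col i $ r)" for r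
    proof -
      have "(matA *v col c) $ r = (matA ** g)$r$c"
        by (simp add: col_def matrix_vector_mult_def matrix_matrix_mult_def)
      also have "\<dots> = (g ** M)$r$c" by (simp add: gM)
      also have "\<dots> = (\<Sum>i\<in>UNIV. M$i$c * col i $ r)"
        by (simp add: col_def matrix_matrix_mult_def mult.commute)
      finally show ?thesis .
    qed
    then show ?thesis by (simp add: vec_eq_iff)
  qed
  have z: "M$2$0 = 0" "M$3$0 = 0" "M$4$0 = 0" "M$5$0 = 0" "M$6$0 = 0" "M$4$1 = 0" "M$5$1 = 0" "M$6$1 = 0"
    using hz unfolding zero_pos_def M_def[symmetric] by (simp_all add: ix_simps)
  have Ax: "matA *v col 0 = M$0$0 *s col 0 + M$1$0 *s col 1"
    by (simp add: colA vec_eq_iff sum7 z)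
  have Aw: "matA *v col 1 = M$0$1 *s col 0 + M$1$1 *s col 1 + M$2$1 *s col 2 + M$3$1 *s col 3"
    by (simp add: colA vec_eq_iff sum7 z)
  note bsimps = bform_add_left bform_add_right bform_smult_left bform_smult_right Bcol mv_add mv_smult
  have "\<exists>c d. col 2 = c *s col 0 + d *s (matA *v col 0)"
  proof (rule SCv)
    show "col 0 \<noteq> 0"
    proof
      assume "col 0 = 0"
      then have "bform (col 0) (col 6) = 0" by (simp add: bform_zero_left)
      then show False by (simp add: Bcol)
    qed
    show "bform (col 0) (col 0) = 0" by (simp add: Bcol)
    show "bform (col 0) (matA *v col 0) = 0" by (simp add: Ax bsimps)
    show "bform (matA *v col 0) (matA *v col 0) = 0" by (simp add: Ax bsimps)
    show "bform (matA *v col 0) (matA *v (matA *v col 0)) = 0" by (simp add: Ax Aw bsimps)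
    show "bform (col 0) (col 2) = 0" by (simp add: Bcol)
    show "bform (matA *v col 0) (col 2) = 0" by (simp add: Ax bsimps)
    show "bform (matA *v (matA *v col 0)) (col 2) = 0" by (simp add: Ax Aw bsimps)
    show "bform (col 2) (col 2) = 0" by (simp add: Bcol)
  qed
  then obtain c d where cd: "col 2 = c *s col 0 + d *s (matA *v col 0)" by blast
  have "bform (col 2) (col 4) = 1" by (simp add: Bcol)
  moreover have "bform (col 2) (col 4) = 0"
    unfolding cd by (simp add: Ax bsimps)
  ultimately show False by simp
qed

end
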